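(* Let $\theta>0$. Let $\mathcal{C}(t)=(C_1(t),C_2(t),\dots)$, $t\ge0$, be the family size counts of the Yule process with immigration (immigration rate $\theta$, birth rate $1$), where $C_j(t)$ is the number of families of size $j$ at time $t$, and let $Z(t)$ be the total population size at time $t$. Let $\tilde{\mathcal{C}}(n)=(\tilde C_1(n),\tilde C_2(n),\dots)$, $n\in\mathbb{Z}_+$, be the family size counts generated by the first $n$ arrivals of the Chinese Restaurant Process with parameter $\theta$. Then for any $p\in\mathbb{N}$, $0<t_1<\dots<t_p$, integers $0\le l_1\le l_2\le\dots\le l_p$, and $u_1,\dots,u_p\in\mathbb{Z}_+^{\mathbb{N}}$, $$\mathbb{P}(\mathcal{C}(t_1)=u_1,\dots,\mathcal{C}(t_p)=u_p\mid Z(t_1)=l_1,\dots,Z(t_p)=l_p)=\mathbb{P}(\tilde{\mathcal{C}}(l_1)=u_1,\dots,\tilde{\mathcal{C}}(l_p)=u_p).$$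
   Context: Yule process with immigration: at time $0$ the population is empty; immigrants arrive at the points of a homogeneous Poisson process of rate $\theta$ on $[0,\infty)$, and each immigrant founds a new family; every individual, independently of everything else, gives birth to a new member of its own family at rate $1$ (no deaths). Chinese Restaurant Process with parameter $\theta$: individuals arrive one at a time; the first founds a new family; given that $n\ge1$ individuals have arrived, the $(n+1)$-st founds a new family with probability $\theta/(\theta+n)$ and otherwise joins an existing family of current size $j$ with probability $j/(\theta+n)$ (for each such family). $\tilde C_j(n)$ is the number of families of size $j$ among the first $n$ arrivals ($\tilde{\mathcal{C}}(0)$ is the zero sequence). *)

theory Defs
  imports "HOL-Probability.Probability"
begin

text \<open>A configuration of family-size counts: c j = number of families of size j
  (index 0 is unused and kept equal to 0).\<close>
type_synonym counts = "nat \<Rightarrow> nat"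

definition count_states :: "counts set" where
  "count_states = {c. c 0 = 0 \<and> finite {j. c j \<noteq> 0}}"

definition popsize :: "counts \<Rightarrow> nat" where
  "popsize c = (\<Sum>j\<in>{j. c j \<noteq> 0}. j * c j)"

definition immig :: "counts \<Rightarrow> counts" where
  "immig c = c(1 := Suc (c 1))"

definition birth :: "nat \<Rightarrow> counts \<Rightarrow> counts" where
  "birth j c = (c(j := c j - 1))(Suc j := Suc (c (Suc j)))"

text \<open>Off-diagonal jump rates: immigration at rate theta; each individual gives
  birth at rate 1, so families of size j grow at total rate j * c j.\<close>
definition yim_rate :: "real \<Rightarrow> counts \<Rightarrow> counts \<Rightarrow> real" where
  "yim_rate \<theta> x y =
     (if y = immig x then \<theta> else 0)
     + (\<Sum>j\<in>{j. 1 \<le> j \<and> x j \<noteq> 0}. if y = birth j x then real (j * x j) else 0)"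

definition yim_exit :: "real \<Rightarrow> counts \<Rightarrow> real" where
  "yim_exit \<theta> x = \<theta> + real (popsize x)"

text \<open>p is the transition function: solution of the Kolmogorov forward equations.\<close>
definition yim_transition :: "real \<Rightarrow> (real \<Rightarrow> counts \<Rightarrow> counts \<Rightarrow> real) \<Rightarrow> bool" where
  "yim_transition \<theta> p \<longleftrightarrow>
     (\<forall>x\<in>count_states. \<forall>y\<in>count_states.
        p 0 x y = (if x = y then 1 else 0) \<and>
        (\<forall>t\<ge>0. ((\<lambda>s. p s x y) has_real_derivative
            ((\<Sum>\<^sub>\<infinity>z\<in>count_states - {y}. p t x z * yim_rate \<theta> z y) - yim_exit \<theta> y * p t x y))
          (at t within {0..})))"

text \<open>C is (a version of) the family-size-count process of the Yule process with
  immigration started from the empty population: its finite-dimensional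
  distributions are those of the Markov chain with the above rates.\<close>
definition yule_immigration ::
  "'a measure \<Rightarrow> real \<Rightarrow> (real \<Rightarrow> 'a \<Rightarrow> counts) \<Rightarrow> bool" where
  "yule_immigration M \<theta> C \<longleftrightarrow>
     prob_space M \<and>
     (\<forall>t\<ge>0. C t \<in> measurable M (count_space UNIV)) \<and>
     (\<forall>t\<ge>0. \<forall>\<omega>\<in>space M. C t \<omega> \<in> count_states) \<and>
     (AE \<omega> in M. C 0 \<omega> = (\<lambda>_. 0)) \<and>
     (\<exists>p. yim_transition \<theta> p \<and>
        (\<forall>ts xs. length ts = length xs \<longrightarrow> sorted_wrt (<) (0 # ts) \<longrightarrow>
           set xs \<subseteq> count_states \<longrightarrow>
           measure M {\<omega>\<in>space M. \<forall>i<length ts. C (ts ! i) \<omega> = xs ! i}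
             = (\<Prod>i<length ts. p (ts ! i - (0 # ts) ! i) (((\<lambda>_. 0) # xs) ! i) (xs ! i))))"

text \<open>Multiset of the family sizes of the individuals: size j appears j * c j times,
  so picking an individual uniformly picks a family of size j w.p. j c_j / n.\<close>
definition indiv_sizes :: "counts \<Rightarrow> nat multiset" where
  "indiv_sizes c = (\<Sum>j\<in>{j. c j \<noteq> 0}. replicate_mset (j * c j) j)"

definition crp_step :: "real \<Rightarrow> counts \<Rightarrow> counts pmf" where
  "crp_step \<theta> c =
     (if popsize c = 0 then return_pmf (immig c)
      else bind_pmf (bernoulli_pmf (\<theta> / (\<theta> + real (popsize c))))
        (\<lambda>b. if b then return_pmf (immig c)
             else map_pmf (\<lambda>j. birth j c) (pmf_of_multiset (indiv_sizes c))))"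

primrec crp_path :: "real \<Rightarrow> nat \<Rightarrow> counts list pmf" where
  "crp_path \<theta> 0 = return_pmf [(\<lambda>_. 0)]"
| "crp_path \<theta> (Suc n) =
     bind_pmf (crp_path \<theta> n) (\<lambda>xs. map_pmf (\<lambda>y. xs @ [y]) (crp_step \<theta> (last xs)))"

definition cond_prob :: "'a measure \<Rightarrow> 'a set \<Rightarrow> 'a set \<Rightarrow> real" where
  "cond_prob M A B = measure M (A \<inter> B) / measure M B"

end

theory Submission
  imports Defs
begin


definition supp :: "counts \<Rightarrow> nat set" where "supp c = {j. c j \<noteq> 0}"

lemma popsize_sum:
  assumes "finite F" "supp c \<subseteq> F"
  shows "popsize c = (\<Sum>j\<in>F. j * c j)"
  unfolding popsize_def
  by (rule sum.mono_neutral_left) (use assms in \<open>auto simp: supp_def\<close>)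

lemma S_finite_supp: "c \<in> count_states \<Longrightarrow> finite (supp c)"
  by (simp add: count_states_def supp_def)

lemma immig_S: "c \<in> count_states \<Longrightarrow> immig c \<in> count_states"
proof -
  assume c: "c \<in> count_states"
  have "{j. immig c j \<noteq> 0} \<subseteq> insert 1 {j. c j \<noteq> 0}" by (auto simp: immig_def)
  moreover have "finite (insert 1 {j. c j \<noteq> 0})" using c by (simp add: count_states_def)
  ultimately have "finite {j. immig c j \<noteq> 0}" by (rule finite_subset)
  then show ?thesis using c unfolding count_states_def by (simp add: immig_def)
qed

lemma birth_S: "c \<in> count_states \<Longrightarrow> 1 \<le> j \<Longrightarrow> birth j c \<in> count_states"
proof -
  assume c: "c \<in> count_states" and j: "1 \<le> j"
  have "{i. birth j c i \<noteq> 0} \<subseteq> insert (Suc j) {i. c i \<noteq> 0}" by (auto simp: birth_def)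
  moreover have "finite (insert (Suc j) {i. c i \<noteq> 0})" using c by (simp add: count_states_def)
  ultimately have "finite {i. birth j c i \<noteq> 0}" by (rule finite_subset)
  then show ?thesis using c j unfolding count_states_def by (simp add: birth_def)
qed

lemma popsize_immig:
  assumes c: "c \<in> count_states"
  shows "popsize (immig c) = Suc (popsize c)"
proof -
  define F where "F = insert 1 (supp c)"
  have F: "finite F" using S_finite_supp[OF c] by (simp add: F_def)
  have 1: "popsize (immig c) = (\<Sum>j\<in>F. j * immig c j)"
    by (rule popsize_sum[OF F]) (auto simp: F_def supp_def immig_def)
  have 2: "popsize c = (\<Sum>j\<in>F. j * c j)"
    by (rule popsize_sum[OF F]) (auto simp: F_def)
  have "(\<Sum>j\<in>F. j * immig c j) = 1 * immig c 1 + (\<Sum>j\<in>F-{1}. j * immig c j)"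
    by (rule sum.remove[OF F]) (simp add: F_def)
  also have "(\<Sum>j\<in>F-{1}. j * immig c j) = (\<Sum>j\<in>F-{1}. j * c j)"
    by (rule sum.cong) (auto simp: immig_def)
  also have "(\<Sum>j\<in>F. j * c j) = 1 * c 1 + (\<Sum>j\<in>F-{1}. j * c j)"
    by (rule sum.remove[OF F]) (simp add: F_def)
  ultimately show ?thesis using 1 2 by (simp add: immig_def)
qed

lemma popsize_birth:
  assumes c: "c \<in> count_states" and j: "1 \<le> j" "c j \<noteq> 0"
  shows "popsize (birth j c) = Suc (popsize c)"
proof -
  define F where "F = insert j (insert (Suc j) (supp c))"
  have F: "finite F" using S_finite_supp[OF c] by (simp add: F_def)
  have 1: "popsize (birth j c) = (\<Sum>i\<in>F. i * birth j c i)"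
    by (rule popsize_sum[OF F]) (auto simp: F_def supp_def birth_def)
  have 2: "popsize c = (\<Sum>i\<in>F. i * c i)"
    by (rule popsize_sum[OF F]) (auto simp: F_def)
  have jF: "j \<in> F" "Suc j \<in> F - {j}" by (auto simp: F_def)
  have a: "(\<Sum>i\<in>F. i * birth j c i) = j * birth j c j + (Suc j * birth j c (Suc j) + (\<Sum>i\<in>F-{j}-{Suc j}. i * birth j c i))"
  proof -
    have fin: "finite (F - {j})" using F by simp
    show ?thesis by (simp add: sum.remove[OF F jF(1)] sum.remove[OF fin jF(2)])
  qed
  have b: "(\<Sum>i\<in>F. i * c i) = j * c j + (Suc j * c (Suc j) + (\<Sum>i\<in>F-{j}-{Suc j}. i * c i))"
  proof -
    have fin: "finite (F - {j})" using F by simp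
    show ?thesis by (simp add: sum.remove[OF F jF(1)] sum.remove[OF fin jF(2)])
  qed
  have c3: "(\<Sum>i\<in>F-{j}-{Suc j}. i * birth j c i) = (\<Sum>i\<in>F-{j}-{Suc j}. i * c i)"
    by (rule sum.cong) (auto simp: birth_def)
  have "j * birth j c j + Suc j * birth j c (Suc j) = Suc (j * c j + Suc j * c (Suc j))"
    using j by (simp add: birth_def algebra_simps) (cases "c j"; simp add: algebra_simps)
  then show ?thesis using 1 2 a b c3 by simp
qed

lemma le_popsize: "c \<in> count_states \<Longrightarrow> j * c j \<le> popsize c"
  unfolding popsize_def
  by (cases "c j = 0") (auto intro!: member_le_sum simp: count_states_def)

lemma finite_pop: "finite {z\<in>count_states. popsize z \<le> m}"
proof -
  let ?A = "{z\<in>count_states. popsize z \<le> m}"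
  have bnd: "z j \<le> m \<and> (m < j \<longrightarrow> z j = 0)" if "z \<in> ?A" for z j
  proof -
    from that have z: "z \<in> count_states" "popsize z \<le> m" by auto
    have "j * z j \<le> m" using le_popsize[OF z(1), of j] z(2) by simp
    moreover have "z 0 = 0" using z by (simp add: count_states_def)
    ultimately show ?thesis
    proof (cases j)
      case (Suc k)
      have "z j \<le> j * z j" using Suc by simp
      moreover have "j \<le> j * z j" if "z j \<noteq> 0" using that by simp
      ultimately show ?thesis using \<open>j * z j \<le> m\<close> by (meson le_trans not_le)
    qed simp
  qed
  have inj: "inj_on (\<lambda>z. map z [0..<Suc m]) ?A"
  proof (rule inj_onI)
    fix x y assume x: "x \<in> ?A" and y: "y \<in> ?A" and e: "map x [0..<Suc m] = map y [0..<Suc m]"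
    show "x = y"
    proof
      fix j show "x j = y j"
      proof (cases "j \<le> m")
        case True then show ?thesis using e by (metis (no_types, lifting) atLeastLessThan_iff less_Suc_eq_le map_eq_conv set_upt zero_le)
      next
        case False then show ?thesis using bnd[OF x, of j] bnd[OF y, of j] by simp
      qed
    qed
  qed
  have "(\<lambda>z. map z [0..<Suc m]) ` ?A \<subseteq> {xs. set xs \<subseteq> {..m} \<and> length xs = Suc m}"
    using bnd by auto
  then have "finite ((\<lambda>z. map z [0..<Suc m]) ` ?A)"
    by (rule finite_subset) (rule finite_lists_length_eq, simp)
  then show ?thesis using finite_image_iff[OF inj] by simp
qed

lemma finite_pop_eq: "finite {z\<in>count_states. popsize z = m}"
  by (rule finite_subset[OF _ finite_pop[of m]]) auto



lemma count_indiv: "c \<in> count_states \<Longrightarrow> count (indiv_sizes c) j = j * c j"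
proof -
  assume c: "c \<in> count_states"
  have fin: "finite {i. c i \<noteq> 0}" using c by (simp add: count_states_def)
  have "count (indiv_sizes c) j = (\<Sum>i\<in>{i. c i \<noteq> 0}. if j = i then i * c i else 0)"
    by (simp add: indiv_sizes_def count_sum)
  also have "\<dots> = (if j \<in> {i. c i \<noteq> 0} then j * c j else 0)"
    using fin by (simp add: sum.delta)
  also have "\<dots> = j * c j" by auto
  finally show ?thesis .
qed

lemma size_indiv: "size (indiv_sizes c) = popsize c"
  by (simp add: indiv_sizes_def popsize_def)

lemma set_indiv: "c \<in> count_states \<Longrightarrow> set_mset (indiv_sizes c) = {j. 1 \<le> j \<and> c j \<noteq> 0}"
  by (auto simp: count_indiv simp flip: count_greater_zero_iff)

lemma popsize_zero: "c \<in> count_states \<Longrightarrow> popsize c = 0 \<Longrightarrow> c = (\<lambda>_. 0)"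
proof
  fix j assume c: "c \<in> count_states" "popsize c = 0"
  show "c j = 0"
  proof (cases j)
    case 0 then show ?thesis using c by (simp add: count_states_def)
  next
    case (Suc k) then show ?thesis using le_popsize[OF c(1), of j] c(2) by simp
  qed
qed

lemma rate_nonzero:
  assumes "yim_rate \<theta> z y \<noteq> 0"
  shows "y = immig z \<or> (\<exists>j. 1 \<le> j \<and> z j \<noteq> 0 \<and> y = birth j z)"
proof (rule ccontr)
  assume n: "\<not> ?thesis"
  then have "(\<Sum>j\<in>{j. 1 \<le> j \<and> z j \<noteq> 0}. if y = birth j z then real (j * z j) else 0) = 0"
    by (intro sum.neutral) auto
  with n assms show False by (simp add: yim_rate_def)
qed

lemma rate_pop:
  assumes z: "z \<in> count_states" and "yim_rate \<theta> z y \<noteq> 0"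
  shows "popsize y = Suc (popsize z)"
  using rate_nonzero[OF assms(2)] popsize_immig[OF z] popsize_birth[OF z] by auto

lemma rate_S:
  assumes z: "z \<in> count_states" and "yim_rate \<theta> z y \<noteq> 0"
  shows "y \<in> count_states"
  using rate_nonzero[OF assms(2)] immig_S[OF z] birth_S[OF z] by auto

lemma set_crp_step:
  assumes z: "z \<in> count_states" and th: "\<theta> > 0"
  shows "set_pmf (crp_step \<theta> z) \<subseteq> {y\<in>count_states. popsize y = Suc (popsize z)}"
proof -
  have "set_pmf (crp_step \<theta> z) \<subseteq> insert (immig z) ((\<lambda>j. birth j z) ` {j. 1 \<le> j \<and> z j \<noteq> 0})"
  proof (cases "popsize z = 0")
    case True then show ?thesis by (simp add: crp_step_def)
  next
    case False
    have "indiv_sizes z \<noteq> {#}" using False size_indiv[of z] by auto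
    then show ?thesis using False by (auto simp: crp_step_def set_indiv[OF z] split: if_splits)
  qed
  then show ?thesis using z immig_S popsize_immig birth_S popsize_birth by auto
qed

lemma pmf_crp_step:
  assumes z: "z \<in> count_states" and th: "\<theta> > 0"
  shows "(\<theta> + real (popsize z)) * pmf (crp_step \<theta> z) y = yim_rate \<theta> z y"
proof (cases "popsize z = 0")
  case True
  then have "z = (\<lambda>_. 0)" using popsize_zero[OF z] by simp
  then have e: "{j. 1 \<le> j \<and> z j \<noteq> 0} = {}" by simp
  show ?thesis unfolding yim_rate_def e using True by (simp add: crp_step_def indicator_def)
next
  case False
  define n where "n = real (popsize z)"
  have n: "n > 0" using False by (simp add: n_def)
  define \<pi> where "\<pi> = \<theta> / (\<theta> + n)"
  have \<pi>: "0 \<le> \<pi>" "\<pi> \<le> 1" using th n by (auto simp: \<pi>_def)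
  define M where "M = pmf_of_multiset (indiv_sizes z)"
  have ne: "indiv_sizes z \<noteq> {#}" using False size_indiv[of z] by auto
  define Jset where "Jset = {j. 1 \<le> j \<and> z j \<noteq> 0}"
  have finJ: "finite Jset" using z by (auto simp: Jset_def count_states_def intro: finite_subset)
  have pM: "pmf M j = real (j * z j) / n" for j
    using ne by (simp add: M_def count_indiv[OF z] size_indiv n_def)
  have sM: "set_pmf M = Jset" using ne by (simp add: M_def set_indiv[OF z] Jset_def)
  have mapM: "pmf (map_pmf (\<lambda>j. birth j z) M) y
      = (\<Sum>j\<in>Jset. (if y = birth j z then real (j * z j) else 0)) / n"
  proof -
    have "pmf (map_pmf (\<lambda>j. birth j z) M) y = (\<integral>j. indicator {y} (birth j z) \<partial>measure_pmf M)"
      by (simp add: map_pmf_def pmf_bind)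
    also have "\<dots> = (\<Sum>j\<in>Jset. indicator {y} (birth j z) * pmf M j)"
      by (rule integral_measure_pmf_real) (use finJ sM in auto)
    also have "\<dots> = (\<Sum>j\<in>Jset. (if y = birth j z then real (j * z j) else 0) / n)"
      by (rule sum.cong) (auto simp: pM split: split_indicator)
    finally show ?thesis by (simp add: sum_divide_distrib)
  qed
  have "pmf (crp_step \<theta> z) y = (\<integral>b. pmf (if b then return_pmf (immig z)
             else map_pmf (\<lambda>j. birth j z) M) y \<partial>measure_pmf (bernoulli_pmf \<pi>))"
    unfolding M_def \<pi>_def n_def using False by (simp add: crp_step_def pmf_bind)
  also have "\<dots> = (\<Sum>b\<in>UNIV. pmf (if b then return_pmf (immig z)
             else map_pmf (\<lambda>j. birth j z) M) y * pmf (bernoulli_pmf \<pi>) b)"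
    by (rule integral_measure_pmf_real) auto
  also have "\<dots> = \<pi> * indicator {immig z} y + (1 - \<pi>) * pmf (map_pmf (\<lambda>j. birth j z) M) y"
    using \<pi> by (simp add: UNIV_bool split: split_indicator)
  finally have e: "pmf (crp_step \<theta> z) y = \<pi> * indicator {immig z} y + (1 - \<pi>) * pmf (map_pmf (\<lambda>j. birth j z) M) y" .
  define S where "S = (\<Sum>j\<in>Jset. (if y = birth j z then real (j * z j) else 0))"
  have r: "yim_rate \<theta> z y = \<theta> * indicator {immig z} y + S"
    by (simp add: yim_rate_def Jset_def S_def indicator_def)
  have a1: "(\<theta> + n) * \<pi> = \<theta>" using th n by (simp add: \<pi>_def)
  have a2: "(\<theta> + n) * (1 - \<pi>) = n" using th n by (simp add: \<pi>_def field_simps)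
  have "(\<theta> + n) * pmf (crp_step \<theta> z) y
      = ((\<theta> + n) * \<pi>) * indicator {immig z} y + ((\<theta> + n) * (1 - \<pi>)) * (S / n)"
    unfolding e mapM S_def by (simp only: algebra_simps)
  also have "\<dots> = \<theta> * indicator {immig z} y + S" using n by (simp add: a1 a2)
  finally show ?thesis using r by (simp add: n_def)
qed



lemma prob_bind_pmf:
  "measure_pmf.prob (bind_pmf M f) A = (\<integral>x. measure_pmf.prob (f x) A \<partial>measure_pmf M)"
  unfolding measure_pmf_bind
  by (rule measure_pmf.measure_bind[where N="count_space UNIV"])
     (auto simp: space_subprob_algebra measure_pmf_in_subprob_algebra intro: prob_space_imp_subprob_space measure_pmf.prob_space_axioms)

lemma last_nth_len: "length ys = Suc n \<Longrightarrow> last ys = ys ! n"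
  by (metis Zero_not_Suc diff_Suc_1 last_conv_nth list.size(3))

primrec path :: "real \<Rightarrow> counts \<Rightarrow> nat \<Rightarrow> counts list pmf" where
  "path \<theta> x 0 = return_pmf [x]"
| "path \<theta> x (Suc n) =
     bind_pmf (path \<theta> x n) (\<lambda>xs. map_pmf (\<lambda>y. xs @ [y]) (crp_step \<theta> (last xs)))"

lemma crp_path_eq: "crp_path \<theta> n = path \<theta> (\<lambda>_. 0) n"
  by (induction n) simp_all

definition K :: "real \<Rightarrow> counts \<Rightarrow> nat \<Rightarrow> counts pmf" where
  "K \<theta> x k = map_pmf last (path \<theta> x k)"

lemma K_0: "K \<theta> x 0 = return_pmf x"
  by (simp add: K_def)

lemma K_Suc: "K \<theta> x (Suc k) = bind_pmf (K \<theta> x k) (crp_step \<theta>)"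
  by (simp add: K_def map_bind_pmf map_pmf_comp bind_map_pmf)

lemma set_path_len:
  "xs \<in> set_pmf (path \<theta> x n) \<Longrightarrow> length xs = Suc n \<and> xs ! 0 = x"
proof (induction n arbitrary: xs)
  case 0 then show ?case by simp
next
  case (Suc n)
  then obtain ys y where "ys \<in> set_pmf (path \<theta> x n)" "xs = ys @ [y]" by auto
  with Suc.IH[of ys] show ?case by (simp add: nth_append)
qed

lemma set_path_states:
  assumes "x \<in> count_states" "\<theta> > 0"
  shows "xs \<in> set_pmf (path \<theta> x n) \<Longrightarrow> k \<le> n \<Longrightarrow>
     xs ! k \<in> count_states \<and> popsize (xs ! k) = popsize x + k"
proof (induction n arbitrary: xs k)
  case 0 then show ?case using assms by simp
next
  case (Suc n)
  then obtain ys y where ys: "ys \<in> set_pmf (path \<theta> x n)" and xs: "xs = ys @ [y]"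
      and y: "y \<in> set_pmf (crp_step \<theta> (last ys))" by auto
  have len: "length ys = Suc n" using set_path_len[OF ys] by simp
  show ?case
  proof (cases "k \<le> n")
    case True then show ?thesis using Suc.IH[OF ys True] len by (simp add: xs nth_append)
  next
    case False
    then have k: "k = Suc n" using Suc.prems by simp
    have l: "last ys = ys ! n" using len by (rule last_nth_len)
    have "last ys \<in> count_states \<and> popsize (last ys) = popsize x + n"
      using Suc.IH[OF ys, of n] l by simp
    then show ?thesis using set_crp_step[of "last ys" \<theta>] assms y k len
      by (auto simp: xs nth_append)
  qed
qed

lemma set_K:
  assumes "x \<in> count_states" "\<theta> > 0" "z \<in> set_pmf (K \<theta> x k)"
  shows "z \<in> count_states \<and> popsize z = popsize x + k"
proof -
  from assms(3) obtain xs where xs: "xs \<in> set_pmf (path \<theta> x k)" "z = last xs"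
    by (auto simp: K_def)
  have "last xs = xs ! k" using set_path_len[OF xs(1)] last_nth_len by blast
  then show ?thesis using set_path_states[OF assms(1,2) xs(1), of k] xs by simp
qed

lemma path_split:
  "path \<theta> x (m + k) = bind_pmf (path \<theta> x m) (\<lambda>xs. map_pmf (\<lambda>ys. xs @ tl ys) (path \<theta> (last xs) k))"
proof (induction k)
  case 0 then show ?case by (simp add: bind_return_pmf')
next
  case (Suc k)
  have "path \<theta> x (m + Suc k) = bind_pmf (path \<theta> x (m + k))
      (\<lambda>xs. map_pmf (\<lambda>y. xs @ [y]) (crp_step \<theta> (last xs)))" by simp
  also have "\<dots> = bind_pmf (path \<theta> x m) (\<lambda>xs. bind_pmf (path \<theta> (last xs) k)
      (\<lambda>ys. map_pmf (\<lambda>y. (xs @ tl ys) @ [y]) (crp_step \<theta> (last (xs @ tl ys)))))"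
    by (simp add: Suc.IH bind_assoc_pmf bind_map_pmf)
  also have "\<dots> = bind_pmf (path \<theta> x m) (\<lambda>xs. bind_pmf (path \<theta> (last xs) k)
      (\<lambda>ys. map_pmf (\<lambda>y. xs @ tl (ys @ [y])) (crp_step \<theta> (last ys))))"
  proof (intro bind_pmf_cong refl)
    fix xs ys assume xs: "xs \<in> set_pmf (path \<theta> x m)" and ys: "ys \<in> set_pmf (path \<theta> (last xs) k)"
    have "xs \<noteq> []" using set_path_len[OF xs] by auto
    have "ys \<noteq> []" "ys ! 0 = last xs" using set_path_len[OF ys] by auto
    then have "last (xs @ tl ys) = last ys"
      using \<open>xs \<noteq> []\<close> by (cases ys) auto
    moreover have "tl (ys @ [y]) = tl ys @ [y]" for y using \<open>ys \<noteq> []\<close> by simp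
    ultimately show "map_pmf (\<lambda>y. (xs @ tl ys) @ [y]) (crp_step \<theta> (last (xs @ tl ys))) =
         map_pmf (\<lambda>y. xs @ tl (ys @ [y])) (crp_step \<theta> (last ys))" by simp
  qed
  also have "\<dots> = bind_pmf (path \<theta> x m) (\<lambda>xs. map_pmf (\<lambda>ys. xs @ tl ys) (path \<theta> (last xs) (Suc k)))"
    by (simp add: map_bind_pmf map_pmf_comp)
  finally show ?case .
qed



lemma chain_mono:
  assumes "\<forall>i. 1 \<le> i \<and> i < p \<longrightarrow> (l::nat\<Rightarrow>'b::order) i \<le> l (Suc i)"
  shows "1 \<le> i \<Longrightarrow> i \<le> j \<Longrightarrow> j \<le> p \<Longrightarrow> l i \<le> l j"
proof (induction j)
  case 0 then show ?case by simp
next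
  case (Suc j)
  show ?case
  proof (cases "i = Suc j")
    case True then show ?thesis by simp
  next
    case False
    then have "l i \<le> l j" using Suc by simp
    also have "l j \<le> l (Suc j)" using assms Suc.prems False by auto
    finally show ?thesis .
  qed
qed

lemma nth_append_tl_last:
  assumes "length xs = Suc a" "length ys = Suc k" "ys ! 0 = last xs"
  shows "(xs @ tl ys) ! (a + k) = last ys"
proof (cases k)
  case 0
  then have "ys = [ys ! 0]" using assms(2) by (cases ys) auto
  then show ?thesis using assms 0 by (simp add: nth_append last_nth_len)
next
  case (Suc k')
  have "(xs @ tl ys) ! (a + k) = tl ys ! k'" using assms Suc by (simp add: nth_append)
  also have "\<dots> = ys ! k" using assms Suc by (cases ys) auto
  also have "\<dots> = last ys" using assms(2) by (simp add: last_nth_len)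
  finally show ?thesis .
qed

lemma markov:
  fixes l :: "nat \<Rightarrow> nat" and w :: "nat \<Rightarrow> counts"
  assumes mono: "\<forall>i. 1 \<le> i \<and> i < p \<longrightarrow> l i \<le> l (Suc i)"
  shows "measure_pmf.prob (path \<theta> x0 (if p = 0 then 0 else l p)) {xs. \<forall>i\<in>{1..p}. xs ! l i = w i}
     = (\<Prod>i\<in>{1..p}. pmf (K \<theta> (if i - 1 = 0 then x0 else w (i - 1))
                          (l i - (if i - 1 = 0 then 0 else l (i - 1)))) (w i))"
  using mono
proof (induction p)
  case 0 then show ?case by simp
next
  case (Suc p)
  have mono': "\<forall>i. 1 \<le> i \<and> i < p \<longrightarrow> l i \<le> l (Suc i)" using Suc.prems by auto
  define Lp where "Lp = (if p = 0 then 0 else l p)"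
  define Wp where "Wp = (if p = 0 then x0 else w p)"
  define k where "k = l (Suc p) - Lp"
  have Lle: "Lp \<le> l (Suc p)" using Suc.prems by (auto simp: Lp_def)
  have LSuc: "l (Suc p) = Lp + k" using Lle by (simp add: k_def)
  define E where "E = {xs. \<forall>i\<in>{1..p}. xs ! l i = w i}"
  define E' where "E' = {xs. \<forall>i\<in>{1..Suc p}. xs ! l i = w i}"
  have IH: "measure_pmf.prob (path \<theta> x0 Lp) E
     = (\<Prod>i\<in>{1..p}. pmf (K \<theta> (if i - 1 = 0 then x0 else w (i - 1))
                          (l i - (if i - 1 = 0 then 0 else l (i - 1)))) (w i))"
    using Suc.IH[OF mono'] by (simp add: Lp_def E_def)
  define c where "c = pmf (K \<theta> Wp k) (w (Suc p))"
  have key: "measure_pmf.prob (path \<theta> (last xs) k) ((\<lambda>ys. xs @ tl ys) -` E') = indicator E xs * c"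
    if xs: "xs \<in> set_pmf (path \<theta> x0 Lp)" for xs
  proof -
    let ?P = "path \<theta> (last xs) k"
    have lxs: "length xs = Suc Lp" "xs ! 0 = x0" using set_path_len[OF xs] by auto
    have li: "l i \<le> Lp" if "i \<in> {1..p}" for i
      using chain_mono[OF mono', of i p] that by (auto simp: Lp_def)
    have eq: "(\<lambda>ys. xs @ tl ys) -` E' \<inter> set_pmf ?P
        = (if xs \<in> E then {ys. last ys = w (Suc p)} else {}) \<inter> set_pmf ?P"
    proof -
      have "ys \<in> (\<lambda>ys. xs @ tl ys) -` E' \<longleftrightarrow> (xs \<in> E \<and> last ys = w (Suc p))"
        if ys: "ys \<in> set_pmf ?P" for ys
      proof -
        have lys: "length ys = Suc k" "ys ! 0 = last xs" using set_path_len[OF ys] by auto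
        have a: "(xs @ tl ys) ! l i = xs ! l i" if "i \<in> {1..p}" for i
          using li[OF that] lxs by (simp add: nth_append)
        have b: "(xs @ tl ys) ! l (Suc p) = last ys"
          using nth_append_tl_last[OF lxs(1) lys] LSuc by simp
        have "{1..Suc p} = insert (Suc p) {1..p}" by auto
        then show ?thesis using a b by (auto simp: E_def E'_def)
      qed
      then show ?thesis by auto
    qed
    have lastxs: "last xs = Wp" if "xs \<in> E"
    proof (cases "p = 0")
      case True then show ?thesis using lxs by (simp add: Wp_def Lp_def last_nth_len)
    next
      case False
      then have "last xs = xs ! l p" using lxs by (simp add: Lp_def last_nth_len)
      then show ?thesis using that False by (auto simp: E_def Wp_def)
    qed
    have "measure_pmf.prob ?P ((\<lambda>ys. xs @ tl ys) -` E')
        = measure_pmf.prob ?P ((if xs \<in> E then {ys. last ys = w (Suc p)} else {}))"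
      by (metis eq measure_Int_set_pmf)
    also have "\<dots> = indicator E xs * c"
    proof (cases "xs \<in> E")
      case True
      have "measure_pmf.prob ?P {ys. last ys = w (Suc p)} = pmf (K \<theta> (last xs) k) (w (Suc p))"
        by (simp add: K_def pmf_map vimage_def)
      then show ?thesis using True lastxs by (simp add: c_def)
    qed simp
    finally show ?thesis .
  qed
  have "measure_pmf.prob (path \<theta> x0 (if Suc p = 0 then 0 else l (Suc p))) E'
      = measure_pmf.prob (path \<theta> x0 (Lp + k)) E'" using LSuc by simp
  also have "\<dots> = (\<integral>xs. measure_pmf.prob (path \<theta> (last xs) k) ((\<lambda>ys. xs @ tl ys) -` E') \<partial>measure_pmf (path \<theta> x0 Lp))"
    by (simp add: path_split prob_bind_pmf)
  also have "\<dots> = (\<integral>xs. indicator E xs * c \<partial>measure_pmf (path \<theta> x0 Lp))"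
    by (rule integral_cong_AE) (auto simp: AE_measure_pmf_iff key)
  also have "\<dots> = measure_pmf.prob (path \<theta> x0 Lp) E * c"
    by simp
  also have "\<dots> = (\<Prod>i\<in>{1..p}. pmf (K \<theta> (if i - 1 = 0 then x0 else w (i - 1))
                          (l i - (if i - 1 = 0 then 0 else l (i - 1)))) (w i)) * c"
    by (simp only: IH)
  also have "\<dots> = (\<Prod>i\<in>{1..Suc p}. pmf (K \<theta> (if i - 1 = 0 then x0 else w (i - 1))
                          (l i - (if i - 1 = 0 then 0 else l (i - 1)))) (w i))"
    by (simp add: c_def Wp_def k_def Lp_def prod.cl_ivl_Suc)
  finally show ?case by (simp add: E'_def)
qed



definition PZ :: "real \<Rightarrow> real \<Rightarrow> nat \<Rightarrow> nat \<Rightarrow> real" where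
  "PZ \<theta> t a b = (if a \<le> b then pochhammer (\<theta> + real a) (b - a) / fact (b - a)
      * exp (- (\<theta> + real a) * t) * (1 - exp (- t)) ^ (b - a) else 0)"

definition PZd :: "real \<Rightarrow> real \<Rightarrow> nat \<Rightarrow> nat \<Rightarrow> real" where
  "PZd \<theta> t a b = (if a < b then (\<theta> + real b - 1) * PZ \<theta> t a (b - 1) else 0) - (\<theta> + real b) * PZ \<theta> t a b"

lemma PZ_deriv: "((\<lambda>s. PZ \<theta> s a b) has_real_derivative PZd \<theta> t a b) (at t)"
proof (cases "a \<le> b")
  case False
  then show ?thesis by (simp add: PZ_def PZd_def)
next
  case True
  define k where "k = b - a"
  define c where "c = pochhammer (\<theta> + real a) k / fact k"
  define E where "E = exp (- (\<theta> + real a) * t)"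
  define w where "w = 1 - exp (- t)"
  have f: "(\<lambda>s. PZ \<theta> s a b) = (\<lambda>s. c * exp (- (\<theta> + real a) * s) * (1 - exp (- s)) ^ k)"
    using True by (simp add: PZ_def c_def k_def fun_eq_iff)
  have d: "((\<lambda>s. c * exp (- (\<theta> + real a) * s) * (1 - exp (- s)) ^ k) has_real_derivative
        c * (E * (- (\<theta> + real a))) * w ^ k + c * E * (real k * w ^ (k - 1) * exp (- t))) (at t)"
    unfolding E_def w_def
    apply (rule derivative_eq_intros refl)+
    apply simp
    done
  show ?thesis
  proof (cases "a = b")
    case True
    then have "k = 0" by (simp add: k_def)
    then show ?thesis using d True unfolding f
      by (simp add: PZd_def PZ_def c_def E_def algebra_simps)
  next
    case False
    have "k > 0" using True False by (simp add: k_def)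
    then obtain m where m: "k = Suc m" using gr0_implies_Suc by blast
    define cm where "cm = pochhammer (\<theta> + real a) m / fact m"
    have cc: "c * real (Suc m) = cm * (\<theta> + real a + real m)"
      by (simp add: c_def cm_def m pochhammer_Suc field_simps del: of_nat_Suc)
    have b1: "b - 1 - a = m" "a \<le> b - 1" "real (b - 1) = real a + real m" using m k_def by auto
    have bb: "real b = real a + real m + 1" using m k_def by auto
    have PZ1: "PZ \<theta> t a (b - 1) = cm * E * w ^ m"
      using b1 by (simp add: PZ_def cm_def E_def w_def)
    have PZ0: "PZ \<theta> t a b = c * E * w ^ Suc m"
      using True m by (simp add: PZ_def c_def E_def w_def k_def)
    have ew: "exp (- t) = 1 - w" by (simp add: w_def)
    have "c * (E * (- (\<theta> + real a))) * w ^ k + c * E * (real k * w ^ (k - 1) * exp (- t))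
        = (c * real (Suc m)) * E * w ^ m - (\<theta> + real a + real m + 1) * c * E * w ^ Suc m"
      unfolding m ew by (simp add: algebra_simps)
    also have "\<dots> = (\<theta> + real a + real m) * (cm * E * w ^ m) - (\<theta> + real a + real m + 1) * (c * E * w ^ Suc m)"
      unfolding cc by (simp add: algebra_simps)
    also have "\<dots> = (\<theta> + real b - 1) * PZ \<theta> t a (b - 1) - (\<theta> + real b) * PZ \<theta> t a b"
      by (simp only: PZ1 PZ0) (simp add: bb algebra_simps)
    also have "\<dots> = PZd \<theta> t a b"
      using True False by (simp add: PZd_def)
    finally show ?thesis using d unfolding f by simp
  qed
qed

lemma PZ_pos: "\<theta> > 0 \<Longrightarrow> t > 0 \<Longrightarrow> a \<le> b \<Longrightarrow> PZ \<theta> t a b > 0"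
  by (auto simp: PZ_def intro!: mult_pos_pos divide_pos_pos pochhammer_pos)

lemma PZ_0: "PZ \<theta> 0 a b = (if a = b then 1 else 0)"
  by (auto simp: PZ_def)



definition ptil :: "real \<Rightarrow> real \<Rightarrow> counts \<Rightarrow> counts \<Rightarrow> real" where
  "ptil \<theta> t x y = pmf (K \<theta> x (popsize y - popsize x)) y * PZ \<theta> t (popsize x) (popsize y)"

lemma infsum_rate:
  assumes x: "x \<in> count_states" and y: "y \<in> count_states" and th: "\<theta> > 0"
  shows "(\<Sum>\<^sub>\<infinity>z\<in>count_states - {y}. ptil \<theta> t x z * yim_rate \<theta> z y)
    = (if popsize x < popsize y then (\<theta> + real (popsize y) - 1) * pmf (K \<theta> x (popsize y - popsize x)) y
          * PZ \<theta> t (popsize x) (popsize y - 1) else 0)"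
proof -
  define a where "a = popsize x"
  define b where "b = popsize y"
  define F where "F = {z\<in>count_states. popsize z = b - 1}"
  have finF: "finite F" unfolding F_def by (rule finite_pop_eq)
  have nz: "z \<in> F" if "z \<in> count_states" "yim_rate \<theta> z y \<noteq> 0" for z
    using rate_pop[OF that] that by (auto simp: F_def b_def)
  have b0: "b \<ge> 1" if "z \<in> count_states" "yim_rate \<theta> z y \<noteq> 0" for z
    using rate_pop[OF that] by (auto simp: b_def)
  have yF: "y \<notin> F" if "b \<ge> 1" using that by (auto simp: F_def b_def)
  show ?thesis
  proof (cases "a < b")
    case False
    have h: "ptil \<theta> t x z * yim_rate \<theta> z y = 0" if "z \<in> count_states - {y}" for z
    proof (cases "yim_rate \<theta> z y = 0")
      case False
      then have "popsize z < a" using rate_pop[of z \<theta> y] that \<open>\<not> a < b\<close> by (auto simp: b_def)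
      then show ?thesis by (simp add: ptil_def PZ_def a_def)
    qed simp
    have "(\<Sum>\<^sub>\<infinity>z\<in>count_states - {y}. ptil \<theta> t x z * yim_rate \<theta> z y) = 0"
      by (intro infsum_0 h)
    then show ?thesis using False by (simp add: a_def b_def)
  next
    case True
    then have b1: "b \<ge> 1" by simp
    define k where "k = b - a"
    obtain k' where k': "k = Suc k'" using True by (metis k_def zero_less_diff gr0_implies_Suc)
    have "(\<Sum>\<^sub>\<infinity>z\<in>count_states - {y}. ptil \<theta> t x z * yim_rate \<theta> z y)
        = (\<Sum>\<^sub>\<infinity>z\<in>F. ptil \<theta> t x z * yim_rate \<theta> z y)"
      by (rule infsum_cong_neutral) (use nz yF[OF b1] in \<open>auto simp: F_def\<close>)
    also have "\<dots> = (\<Sum>z\<in>F. ptil \<theta> t x z * yim_rate \<theta> z y)" using finF by simp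
    also have "\<dots> = (\<Sum>z\<in>F. PZ \<theta> t a (b - 1) * (\<theta> + real (b - 1)) * (pmf (crp_step \<theta> z) y * pmf (K \<theta> x k') z))"
    proof (rule sum.cong)
      fix z assume z: "z \<in> F"
      then have zS: "z \<in> count_states" and pz: "popsize z = b - 1" by (auto simp: F_def)
      have "b - 1 - a = k'" using k' k_def by simp
      then show "ptil \<theta> t x z * yim_rate \<theta> z y = PZ \<theta> t a (b - 1) * (\<theta> + real (b - 1)) * (pmf (crp_step \<theta> z) y * pmf (K \<theta> x k') z)"
        using pmf_crp_step[OF zS th, of y] pz by (simp add: ptil_def a_def)
    qed simp
    also have "\<dots> = PZ \<theta> t a (b - 1) * (\<theta> + real (b - 1)) * (\<Sum>z\<in>F. pmf (crp_step \<theta> z) y * pmf (K \<theta> x k') z)"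
      by (simp add: sum_distrib_left)
    also have "(\<Sum>z\<in>F. pmf (crp_step \<theta> z) y * pmf (K \<theta> x k') z) = pmf (K \<theta> x k) y"
    proof -
      have "pmf (K \<theta> x k) y = (\<integral>z. pmf (crp_step \<theta> z) y \<partial>measure_pmf (K \<theta> x k'))"
        by (simp add: k' K_Suc pmf_bind)
      also have "\<dots> = (\<Sum>z\<in>F. pmf (crp_step \<theta> z) y * pmf (K \<theta> x k') z)"
      proof (rule integral_measure_pmf_real[OF finF])
        fix z assume "z \<in> set_pmf (K \<theta> x k')"
        from set_K[OF x th this] show "z \<in> F" using k' k_def True by (auto simp: F_def a_def)
      qed
      finally show ?thesis by simp
    qed
    finally show ?thesis using True b1 by (simp add: a_def b_def k_def algebra_simps of_nat_diff)
  qed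
qed

lemma ptil_forward:
  assumes x: "x \<in> count_states" and y: "y \<in> count_states" and th: "\<theta> > 0"
  shows "((\<lambda>s. ptil \<theta> s x y) has_real_derivative
     ((\<Sum>\<^sub>\<infinity>z\<in>count_states - {y}. ptil \<theta> t x z * yim_rate \<theta> z y) - yim_exit \<theta> y * ptil \<theta> t x y)) (at t within A)"
proof -
  have "((\<lambda>s. ptil \<theta> s x y) has_real_derivative
      pmf (K \<theta> x (popsize y - popsize x)) y * PZd \<theta> t (popsize x) (popsize y)) (at t)"
    unfolding ptil_def by (intro DERIV_cmult PZ_deriv)
  moreover have "pmf (K \<theta> x (popsize y - popsize x)) y * PZd \<theta> t (popsize x) (popsize y)
     = (\<Sum>\<^sub>\<infinity>z\<in>count_states - {y}. ptil \<theta> t x z * yim_rate \<theta> z y) - yim_exit \<theta> y * ptil \<theta> t x y"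
    unfolding infsum_rate[OF x y th] by (simp add: PZd_def yim_exit_def ptil_def algebra_simps)
  ultimately show ?thesis by (metis has_field_derivative_at_within)
qed

lemma ptil_0:
  assumes "x \<in> count_states" "y \<in> count_states"
  shows "ptil \<theta> 0 x y = (if x = y then 1 else 0)"
proof (cases "popsize x = popsize y")
  case True then show ?thesis by (simp add: ptil_def PZ_0 K_0 indicator_def)
next
  case False then show ?thesis by (auto simp: ptil_def PZ_0)
qed

lemma unique:
  assumes p: "yim_transition \<theta> p" and x: "x \<in> count_states" and th: "\<theta> > 0"
  shows "y \<in> count_states \<Longrightarrow> t \<ge> 0 \<Longrightarrow> p t x y = ptil \<theta> t x y"
proof (induction "popsize y" arbitrary: y t rule: less_induct)
  case less
  note y = less.prems(1)
  define q where "q = yim_exit \<theta> y"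
  define Gp where "Gp = (\<lambda>s. \<Sum>\<^sub>\<infinity>z\<in>count_states - {y}. p s x z * yim_rate \<theta> z y)"
  define Gt where "Gt = (\<lambda>s. \<Sum>\<^sub>\<infinity>z\<in>count_states - {y}. ptil \<theta> s x z * yim_rate \<theta> z y)"
  have G: "Gp s = Gt s" if "s \<ge> 0" for s
    unfolding Gp_def Gt_def
  proof (rule infsum_cong)
    fix z assume z: "z \<in> count_states - {y}"
    show "p s x z * yim_rate \<theta> z y = ptil \<theta> s x z * yim_rate \<theta> z y"
    proof (cases "yim_rate \<theta> z y = 0")
      case False
      then have "popsize z < popsize y" using rate_pop[of z \<theta> y] z by auto
      then show ?thesis using less.hyps[of z s] z that by auto
    qed simp
  qed
  have dp: "((\<lambda>s. p s x y) has_real_derivative (Gp s - q * p s x y)) (at s within {0..})" if "s \<ge> 0" for s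
    using p x y that unfolding yim_transition_def Gp_def q_def by blast
  have dt: "((\<lambda>s. ptil \<theta> s x y) has_real_derivative (Gt s - q * ptil \<theta> s x y)) (at s within {0..})" for s
    unfolding Gt_def q_def by (rule ptil_forward[OF x y th])
  have d0: "((\<lambda>s. (p s x y - ptil \<theta> s x y) * exp (q * s)) has_real_derivative 0) (at s within {0..})"
    if "s \<ge> 0" for s
  proof -
    have e: "((\<lambda>s. exp (q * s)) has_real_derivative exp (q * s) * q) (at s within {0..})"
      by (auto intro!: derivative_eq_intros)
    note DERIV_mult[OF DERIV_diff[OF dp[OF that] dt] e]
    then show ?thesis using G[OF that] by (simp add: algebra_simps)
  qed
  obtain c where c: "\<forall>s\<in>{0..}. (p s x y - ptil \<theta> s x y) * exp (q * s) = c"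
    using has_field_derivative_zero_constant[OF convex_real_interval(1) d0] by auto
  have "c = 0" using c[rule_format, of 0] p x y ptil_0[OF x y, of \<theta>] unfolding yim_transition_def by auto
  then have "(p t x y - ptil \<theta> t x y) * exp (q * t) = 0" using c less.prems(2) by auto
  then show ?case by simp
qed



lemma agree: "c \<in> count_states \<Longrightarrow> (\<forall>j\<ge>1. c j = u j) \<longleftrightarrow> c = u(0 := 0)"
  by (auto simp: count_states_def fun_eq_iff)

lemma zero_S: "(\<lambda>_. 0) \<in> count_states" by (simp add: count_states_def)
lemma popsize_zero': "popsize (\<lambda>_. 0) = 0" by (simp add: popsize_def)

lemma strict_chain:
  assumes "\<forall>i. 1 \<le> i \<and> i < p \<longrightarrow> (t::nat\<Rightarrow>real) i < t (Suc i)"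
  shows "1 \<le> i \<Longrightarrow> i < j \<Longrightarrow> j \<le> p \<Longrightarrow> t i < t j"
proof (induction j)
  case 0 then show ?case by simp
next
  case (Suc j)
  show ?case
  proof (cases "i = j")
    case True then show ?thesis using assms Suc.prems by auto
  next
    case False
    then have "t i < t j" using Suc by simp
    also have "t j < t (Suc j)" using assms Suc.prems False by auto
    finally show ?thesis .
  qed
qed

declare upt_Suc[simp del]

theorem theorem3:
  fixes M :: "'a measure" and \<theta> :: real and C :: "real \<Rightarrow> 'a \<Rightarrow> counts"
    and p :: nat and t :: "nat \<Rightarrow> real" and l :: "nat \<Rightarrow> nat" and u :: "nat \<Rightarrow> nat \<Rightarrow> nat"
  assumes "\<theta> > 0"
    and "yule_immigration M \<theta> C"
    and "p \<ge> 1"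
    and "0 < t 1" and "\<forall>i. 1 \<le> i \<and> i < p \<longrightarrow> t i < t (Suc i)"
    and "\<forall>i. 1 \<le> i \<and> i < p \<longrightarrow> l i \<le> l (Suc i)"
  shows "cond_prob M
           {\<omega>\<in>space M. \<forall>i\<in>{1..p}. \<forall>j\<ge>1. C (t i) \<omega> j = u i j}
           {\<omega>\<in>space M. \<forall>i\<in>{1..p}. popsize (C (t i) \<omega>) = l i}
         = measure_pmf.prob (crp_path \<theta> (l p))
             {xs. \<forall>i\<in>{1..p}. \<forall>j\<ge>1. (xs ! l i) j = u i j}"
proof -
  note th = assms(1)
  note tmono = assms(5) and lmono = assms(6)
  let ?S = count_states
  let ?z = "(\<lambda>_. 0) :: counts"
  from assms(2) have PS: "prob_space M"
    and meas: "\<forall>s\<ge>0. C s \<in> measurable M (count_space UNIV)"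
    and inS: "\<forall>s\<ge>0. \<forall>\<omega>\<in>space M. C s \<omega> \<in> ?S"
    unfolding yule_immigration_def by auto
  from assms(2) obtain tr where tr: "yim_transition \<theta> tr"
    and fdd: "\<And>ts xs. length ts = length xs \<Longrightarrow> sorted_wrt (<) (0 # ts) \<Longrightarrow> set xs \<subseteq> ?S \<Longrightarrow>
           measure M {\<omega>\<in>space M. \<forall>i<length ts. C (ts ! i) \<omega> = xs ! i}
             = (\<Prod>i<length ts. tr (ts ! i - (0 # ts) ! i) ((?z # xs) ! i) (xs ! i))"
    unfolding yule_immigration_def by blast
  interpret M: prob_space M by (rule PS)
  have tpos: "t i > 0" if "i \<in> {1..p}" for i
  proof (cases "i = 1")
    case True then show ?thesis using assms(4) by simp
  next
    case False
    then have "t 1 < t i" using strict_chain[OF tmono, of 1 i] that by auto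
    then show ?thesis using assms(4) by simp
  qed
  have lle: "l i \<le> l p" if "i \<in> {1..p}" for i
    using chain_mono[OF lmono, of i p] that by auto
  define ts where "ts = map t [1..<Suc p]"
  have ts_len: "length ts = p" by (simp add: ts_def)
  have ts_nth: "ts ! i = t (Suc i)" if "i < p" for i using that unfolding ts_def by (simp del: upt_Suc)
  have ts0: "(0 # ts) ! i = (if i = 0 then 0 else t i)" if "i < p" for i
    using that by (cases i) (auto simp: ts_nth)
  have sorted: "sorted_wrt (<) (0 # ts)"
    unfolding sorted_wrt_iff_nth_less
  proof (intro allI impI)
    fix i j :: nat assume ij: "i < j" "j < length (0 # ts)"
    then obtain j' where j': "j = Suc j'" "j' < p" by (cases j) (auto simp: ts_len)
    show "(0 # ts) ! i < (0 # ts) ! j"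
    proof (cases i)
      case 0 then show ?thesis using j' tpos[of "Suc j'"] by (simp add: ts_nth)
    next
      case (Suc i')
      then show ?thesis using j' ij strict_chain[OF tmono, of "Suc i'" "Suc j'"] by (simp add: ts_nth)
    qed
  qed
  define Wset where "Wset = {ws. length ws = p \<and> (\<forall>i<p. ws ! i \<in> ?S \<and> popsize (ws ! i) = l (Suc i))}"
  define Ev where "Ev = (\<lambda>ws. {\<omega>\<in>space M. \<forall>i<p. C (t (Suc i)) \<omega> = ws ! i})"
  define Ecrp where "Ecrp = (\<lambda>ws::counts list. {xs. \<forall>i\<in>{1..p}. xs ! l i = ws ! (i - 1)})"
  define Q where "Q = (\<lambda>ws. measure_pmf.prob (crp_path \<theta> (l p)) (Ecrp ws))"
  define PZprod where "PZprod = (\<Prod>i<p. PZ \<theta> (t (Suc i) - (if i = 0 then 0 else t i)) (if i = 0 then 0 else l i) (l (Suc i)))"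
  have PZprod_pos: "PZprod > 0"
    unfolding PZprod_def
  proof (rule prod_pos)
    fix i assume i: "i \<in> {..<p}"
    have "t (Suc i) - (if i = 0 then 0 else t i) > 0"
      using tpos[of "Suc i"] i tmono by auto
    moreover have "(if i = 0 then 0 else l i) \<le> l (Suc i)" using i lmono by auto
    ultimately show "PZ \<theta> (t (Suc i) - (if i = 0 then 0 else t i)) (if i = 0 then 0 else l i) (l (Suc i)) > 0"
      by (intro PZ_pos th)
  qed
  have Q_eq: "Q ws = (\<Prod>i<p. pmf (K \<theta> (if i = 0 then ?z else ws ! (i - 1))
                  (l (Suc i) - (if i = 0 then 0 else l i))) (ws ! i))" for ws
  proof -
    have "Q ws = measure_pmf.prob (path \<theta> ?z (if p = 0 then 0 else l p)) {xs. \<forall>i\<in>{1..p}. xs ! l i = ws ! (i - 1)}"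
      using assms(3) by (simp add: Q_def Ecrp_def crp_path_eq)
    also have "\<dots> = (\<Prod>i\<in>{1..p}. pmf (K \<theta> (if i - 1 = 0 then ?z else ws ! (i - 1 - 1))
                          (l i - (if i - 1 = 0 then 0 else l (i - 1)))) (ws ! (i - 1)))"
      by (rule markov[OF lmono])
    also have "\<dots> = (\<Prod>i<p. pmf (K \<theta> (if i = 0 then ?z else ws ! (i - 1))
                  (l (Suc i) - (if i = 0 then 0 else l i))) (ws ! i))"
      by (simp add: prod.atLeast1_atMost_eq cong: if_cong)
    finally show ?thesis .
  qed
  have Ev_meas: "measure M (Ev ws) = PZprod * Q ws" if ws: "ws \<in> Wset" for ws
  proof -
    have len: "length ws = p" and wsS: "\<And>i. i < p \<Longrightarrow> ws ! i \<in> ?S"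
      and wsP: "\<And>i. i < p \<Longrightarrow> popsize (ws ! i) = l (Suc i)" using ws by (auto simp: Wset_def)
    have setws: "set ws \<subseteq> ?S" using wsS len by (auto simp: in_set_conv_nth)
    have "Ev ws = {\<omega>\<in>space M. \<forall>i<length ts. C (ts ! i) \<omega> = ws ! i}"
      by (simp add: Ev_def ts_len ts_nth)
    then have "measure M (Ev ws) = (\<Prod>i<p. tr (ts ! i - (0 # ts) ! i) ((?z # ws) ! i) (ws ! i))"
      using fdd[OF _ sorted setws] ts_len len by simp
    also have "\<dots> = (\<Prod>i<p. pmf (K \<theta> (if i = 0 then ?z else ws ! (i - 1))
                  (l (Suc i) - (if i = 0 then 0 else l i))) (ws ! i)
          * PZ \<theta> (t (Suc i) - (if i = 0 then 0 else t i)) (if i = 0 then 0 else l i) (l (Suc i)))"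
    proof (rule prod.cong[OF refl])
      fix i assume i: "i \<in> {..<p}"
      have X: "(?z # ws) ! i = (if i = 0 then ?z else ws ! (i - 1))" by (cases i) auto
      have XS: "(if i = 0 then ?z else ws ! (i - 1)) \<in> ?S" using wsS i zero_S by auto
      have XP: "popsize (if i = 0 then ?z else ws ! (i - 1)) = (if i = 0 then 0 else l i)"
        using wsP[of "i - 1"] i popsize_zero' by auto
      have T: "ts ! i - (0 # ts) ! i = t (Suc i) - (if i = 0 then 0 else t i)"
        using i ts0 ts_nth by auto
      have Tpos: "t (Suc i) - (if i = 0 then 0 else t i) \<ge> 0"
        using tpos[of "Suc i"] i tmono by (auto simp: less_imp_le)
      show "tr (ts ! i - (0 # ts) ! i) ((?z # ws) ! i) (ws ! i) = pmf (K \<theta> (if i = 0 then ?z else ws ! (i - 1))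
                  (l (Suc i) - (if i = 0 then 0 else l i))) (ws ! i)
          * PZ \<theta> (t (Suc i) - (if i = 0 then 0 else t i)) (if i = 0 then 0 else l i) (l (Suc i))"
      proof -
        have ip: "i < p" using i by simp
        have U: "tr (t (Suc i) - (if i = 0 then 0 else t i)) (if i = 0 then ?z else ws ! (i - 1)) (ws ! i)
           = ptil \<theta> (t (Suc i) - (if i = 0 then 0 else t i)) (if i = 0 then ?z else ws ! (i - 1)) (ws ! i)"
          by (rule unique[OF tr XS th wsS[OF ip] Tpos])
        show ?thesis unfolding X T U ptil_def XP wsP[OF ip] by simp
      qed
    qed
    also have "\<dots> = Q ws * PZprod"
      by (simp add: prod.distrib Q_eq PZprod_def)
    finally show ?thesis by simp
  qed
  have Ev_sets: "Ev ws \<in> sets M" for ws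
  proof -
    have "Ev ws = {\<omega>\<in>space M. \<forall>i\<in>{..<p}. C (t (Suc i)) \<omega> = ws ! i}" by (auto simp: Ev_def)
    also have "\<dots> \<in> sets M"
    proof (rule sets.sets_Collect_finite_All)
      fix i assume i: "i \<in> {..<p}"
      have "t (Suc i) \<ge> 0" using tpos[of "Suc i"] i by auto
      then have "C (t (Suc i)) \<in> measurable M (count_space UNIV)" using meas by auto
      then have "C (t (Suc i)) -` {ws ! i} \<inter> space M \<in> sets M" by (rule measurable_sets) simp
      moreover have "{\<omega>\<in>space M. C (t (Suc i)) \<omega> = ws ! i} = C (t (Suc i)) -` {ws ! i} \<inter> space M" by auto
      ultimately show "{\<omega>\<in>space M. C (t (Suc i)) \<omega> = ws ! i} \<in> sets M" by simp
    qed simp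
    finally show ?thesis .
  qed
  have finW: "finite Wset"
  proof (rule finite_subset)
    show "Wset \<subseteq> {ws. set ws \<subseteq> {z\<in>?S. popsize z \<le> l p} \<and> length ws = p}"
    proof (clarify, intro conjI)
      fix ws assume ws: "ws \<in> Wset"
      show "set ws \<subseteq> {z\<in>?S. popsize z \<le> l p}"
      proof
        fix z assume "z \<in> set ws"
        then obtain i where i: "i < length ws" "z = ws ! i" by (auto simp: in_set_conv_nth)
        then show "z \<in> {z\<in>?S. popsize z \<le> l p}" using ws lle[of "Suc i"] by (auto simp: Wset_def)
      qed
      show "length ws = p" using ws by (simp add: Wset_def)
    qed
    show "finite {ws. set ws \<subseteq> {z\<in>?S. popsize z \<le> l p} \<and> length ws = p}"
      by (rule finite_lists_length_eq[OF finite_pop])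
  qed
  have eq_list: "ws = ws'" if "ws \<in> Wset" "ws' \<in> Wset" "\<forall>i<p. ws ! i = ws' ! i" for ws ws'
    using that by (intro nth_equalityI) (auto simp: Wset_def)
  define B where "B = {\<omega>\<in>space M. \<forall>i\<in>{1..p}. popsize (C (t i) \<omega>) = l i}"
  have B_eq: "B = (\<Union>ws\<in>Wset. Ev ws)"
  proof (intro equalityI subsetI)
    fix \<omega> assume \<omega>: "\<omega> \<in> B"
    define ws where "ws = map (\<lambda>i. C (t i) \<omega>) [1..<Suc p]"
    have "ws \<in> Wset" using \<omega> inS tpos by (auto simp: ws_def Wset_def B_def less_imp_le)
    moreover have "\<omega> \<in> Ev ws" using \<omega> by (auto simp: ws_def Ev_def B_def)
    ultimately show "\<omega> \<in> (\<Union>ws\<in>Wset. Ev ws)" by blast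
  next
    fix \<omega> assume "\<omega> \<in> (\<Union>ws\<in>Wset. Ev ws)"
    then obtain ws where ws: "ws \<in> Wset" "\<omega> \<in> Ev ws" by auto
    show "\<omega> \<in> B" unfolding B_def
    proof (safe)
      show "\<omega> \<in> space M" using ws by (auto simp: Ev_def)
      fix i assume i: "i \<in> {1..p}"
      then obtain i' where "i = Suc i'" "i' < p" by (cases i) auto
      then show "popsize (C (t i) \<omega>) = l i" using ws by (auto simp: Ev_def Wset_def)
    qed
  qed
  have disjEv: "disjoint_family_on Ev Wset"
    unfolding disjoint_family_on_def
  proof (intro ballI impI)
    fix ws ws' assume "ws \<in> Wset" "ws' \<in> Wset" "ws \<noteq> ws'"
    then show "Ev ws \<inter> Ev ws' = {}" using eq_list by (auto simp: Ev_def)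
  qed
  have sumQ: "(\<Sum>ws\<in>Wset. Q ws) = 1"
  proof -
    let ?P = "crp_path \<theta> (l p)"
    have disj: "disjoint_family_on Ecrp Wset"
      unfolding disjoint_family_on_def
    proof (intro ballI impI)
      fix ws ws' assume a: "ws \<in> Wset" "ws' \<in> Wset" "ws \<noteq> ws'"
      show "Ecrp ws \<inter> Ecrp ws' = {}"
      proof (rule ccontr)
        assume "Ecrp ws \<inter> Ecrp ws' \<noteq> {}"
        then obtain xs where "xs \<in> Ecrp ws" "xs \<in> Ecrp ws'" by auto
        then have h: "\<forall>i\<in>{1..p}. ws ! (i - 1) = ws' ! (i - 1)" by (auto simp: Ecrp_def)
        have "\<forall>i<p. ws ! i = ws' ! i"
        proof (intro allI impI)
          fix i assume "i < p"
          then have "Suc i \<in> {1..p}" by simp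
          from h[rule_format, OF this] show "ws ! i = ws' ! i" by simp
        qed
        then show False using eq_list a by auto
      qed
    qed
    have "(\<Sum>ws\<in>Wset. Q ws) = measure_pmf.prob ?P (\<Union>ws\<in>Wset. Ecrp ws)"
      unfolding Q_def by (rule measure_finite_Union[symmetric, OF finW _ disj]) auto
    also have "\<dots> = 1"
    proof -
      have sub: "set_pmf ?P \<subseteq> (\<Union>ws\<in>Wset. Ecrp ws)"
      proof
        fix xs assume xs: "xs \<in> set_pmf ?P"
        then have xs': "xs \<in> set_pmf (path \<theta> ?z (l p))" by (simp add: crp_path_eq)
        define ws where "ws = map (\<lambda>i. xs ! l i) [1..<Suc p]"
        have "ws \<in> Wset"
          using set_path_states[OF zero_S th xs'] lle popsize_zero'
          by (auto simp: ws_def Wset_def)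
        moreover have "xs \<in> Ecrp ws" by (auto simp: ws_def Ecrp_def)
        ultimately show "xs \<in> (\<Union>ws\<in>Wset. Ecrp ws)" by blast
      qed
      have "measure_pmf.prob ?P (\<Union>ws\<in>Wset. Ecrp ws) = measure_pmf.prob ?P ((\<Union>ws\<in>Wset. Ecrp ws) \<inter> set_pmf ?P)"
        by (simp add: measure_Int_set_pmf)
      also have "(\<Union>ws\<in>Wset. Ecrp ws) \<inter> set_pmf ?P = UNIV \<inter> set_pmf ?P" using sub by auto
      also have "measure_pmf.prob ?P (UNIV \<inter> set_pmf ?P) = measure_pmf.prob ?P UNIV"
        by (rule measure_Int_set_pmf)
      also have "\<dots> = 1" by (metis measure_pmf.prob_space space_measure_pmf)
      finally show ?thesis .
    qed
    finally show ?thesis .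
  qed
  have measB: "measure M B = PZprod"
  proof -
    have "measure M B = (\<Sum>ws\<in>Wset. measure M (Ev ws))"
      unfolding B_eq by (rule measure_finite_Union[OF finW _ disjEv]) (auto simp: Ev_sets)
    also have "\<dots> = (\<Sum>ws\<in>Wset. PZprod * Q ws)" by (rule sum.cong) (auto simp: Ev_meas)
    also have "\<dots> = PZprod" by (simp add: sum_distrib_left[symmetric] sumQ)
    finally show ?thesis .
  qed
  define v where "v = (\<lambda>i. (u i)(0 := 0))"
  define A where "A = {\<omega>\<in>space M. \<forall>i\<in>{1..p}. \<forall>j\<ge>1. C (t i) \<omega> j = u i j}"
  define R where "R = {xs. \<forall>i\<in>{1..p}. \<forall>j\<ge>1. (xs ! l i) j = u i j}"
  have supp_crp: "xs ! l i \<in> ?S \<and> popsize (xs ! l i) = l i"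
    if "xs \<in> set_pmf (crp_path \<theta> (l p))" "i \<in> {1..p}" for xs i
    using set_path_states[OF zero_S th, of xs "l p" "l i"] that lle[OF that(2)] popsize_zero'
    by (simp add: crp_path_eq)
  show ?thesis
  proof (cases "\<forall>i\<in>{1..p}. v i \<in> ?S \<and> popsize (v i) = l i")
    case False
    then obtain i where i: "i \<in> {1..p}" "\<not> (v i \<in> ?S \<and> popsize (v i) = l i)" by auto
    have AB: "A \<inter> B = {}"
    proof (rule ccontr)
      assume "A \<inter> B \<noteq> {}"
      then obtain \<omega> where \<omega>: "\<omega> \<in> A" "\<omega> \<in> B" by auto
      have CS: "C (t i) \<omega> \<in> ?S" using inS tpos[OF i(1)] \<omega> by (auto simp: A_def less_imp_le)
      have Cv: "C (t i) \<omega> = v i" using \<omega> i agree[OF CS] by (auto simp: A_def v_def)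
      have "popsize (C (t i) \<omega>) = l i" using \<omega>(2) i(1) unfolding B_def by blast
      then show False using CS i(2) Cv by auto
    qed
    have R0: "measure_pmf.prob (crp_path \<theta> (l p)) R = 0"
      unfolding measure_pmf_zero_iff
    proof (rule ccontr)
      assume "set_pmf (crp_path \<theta> (l p)) \<inter> R \<noteq> {}"
      then obtain xs where xs: "xs \<in> set_pmf (crp_path \<theta> (l p))" "xs \<in> R" by auto
      have "\<forall>j\<ge>1. (xs ! l i) j = u i j" using xs(2) i(1) unfolding R_def by blast
      then have "xs ! l i = v i" using agree[of "xs ! l i" "u i"] supp_crp[OF xs(1) i(1)] by (simp add: v_def)
      then show False using supp_crp[OF xs(1) i(1)] i by auto
    qed
    show ?thesis unfolding A_def[symmetric] B_def[symmetric] R_def[symmetric]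
      using AB R0 by (simp add: cond_prob_def)
  next
    case True
    define vs where "vs = map v [1..<Suc p]"
    have vsW: "vs \<in> Wset" using True by (auto simp: vs_def Wset_def)
    have AB: "A \<inter> B = Ev vs"
    proof (intro equalityI subsetI)
      fix \<omega> assume \<omega>: "\<omega> \<in> A \<inter> B"
      have "C (t i) \<omega> = v i" if "i \<in> {1..p}" for i
        using \<omega> that agree[of "C (t i) \<omega>" "u i"] inS tpos[OF that] by (auto simp: A_def v_def less_imp_le)
      then show "\<omega> \<in> Ev vs" using \<omega> by (auto simp: Ev_def vs_def A_def)
    next
      fix \<omega> assume \<omega>: "\<omega> \<in> Ev vs"
      have C: "C (t i) \<omega> = v i" if ii: "i \<in> {1..p}" for i
      proof -
        obtain i' where "i = Suc i'" "i' < p" using ii by (cases i) auto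
        then show ?thesis using \<omega> by (auto simp: Ev_def vs_def)
      qed
      have sp: "\<omega> \<in> space M" using \<omega> by (auto simp: Ev_def)
      show "\<omega> \<in> A \<inter> B" using C True sp by (auto simp: A_def B_def v_def)
    qed
    have R_eq: "measure_pmf.prob (crp_path \<theta> (l p)) R = Q vs"
    proof -
      have "R \<inter> set_pmf (crp_path \<theta> (l p)) = Ecrp vs \<inter> set_pmf (crp_path \<theta> (l p))"
      proof (intro equalityI subsetI)
        fix xs assume xs: "xs \<in> R \<inter> set_pmf (crp_path \<theta> (l p))"
        have "xs ! l i = vs ! (i - 1)" if "i \<in> {1..p}" for i
          using xs that agree[of "xs ! l i" "u i"] supp_crp[of xs i]
          by (auto simp: R_def vs_def v_def nth_append)
        then show "xs \<in> Ecrp vs \<inter> set_pmf (crp_path \<theta> (l p))" using xs by (auto simp: Ecrp_def)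
      next
        fix xs assume xs: "xs \<in> Ecrp vs \<inter> set_pmf (crp_path \<theta> (l p))"
        have "xs ! l i = v i" if ii: "i \<in> {1..p}" for i
        proof -
          obtain i' where "i = Suc i'" "i' < p" using ii by (cases i) auto
          then show ?thesis using xs ii by (auto simp: Ecrp_def vs_def)
        qed
        then show "xs \<in> R \<inter> set_pmf (crp_path \<theta> (l p))" using xs by (auto simp: R_def v_def)
      qed
      then show ?thesis unfolding Q_def by (metis measure_Int_set_pmf)
    qed
    have "cond_prob M A B = PZprod * Q vs / PZprod"
      by (simp add: cond_prob_def AB Ev_meas[OF vsW] measB)
    also have "\<dots> = Q vs" using PZprod_pos by simp
    finally show ?thesis unfolding A_def[symmetric] B_def[symmetric] R_def[symmetric]
      using R_eq by simp
  qed
qed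

end
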